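(* Let $\Gamma=(V,E)$ be a simple graph of order $n$ and let $\lambda$ be the spectral radius of $\Gamma$. Then the global defensive alliance number of $\Gamma$ satisfies $$\gamma_{a}(\Gamma)\ge \left\lceil\frac{n}{\lambda+2}\right\rceil$$ and the global strong defensive alliance number of $\Gamma$ satisfies $$\gamma_{\hat{a}}(\Gamma)\ge \left\lceil\frac{n}{\lambda+1}\right\rceil.$$
   Context: For $S\subseteq V$ and $v\in V$, $N_S(v)=\{u\in S: u\sim v\}$ and $N_{V\setminus S}(v)=\{u\in V\setminus S: u\sim v\}$. A nonempty set $S\subseteq V$ is a defensive alliance if $|N_S(v)|+1\ge |N_{V\setminus S}(v)|$ for every $v\in S$, and a strong defensive alliance if $|N_S(v)|\ge |N_{V\setminus S}(v)|$ for every $v\in S$. A (strong) defensive alliance is global if it is a dominating set, i.e. every vertex of $V\setminus S$ is adjacent to some vertex of $S$. $\gamma_a(\Gamma)$ (resp. $\gamma_{\hat a}(\Gamma)$) is the minimum cardinality of a global defensive (resp. global strong defensive) alliance. The spectral radius is the largest eigenvalue of the adjacency matrix of $\Gamma$. *)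

theory Defs
  imports "HOL-Analysis.Analysis"
begin

text \<open>A finite simple graph: vertex set is the finite type 'n (all of UNIV),
  edge relation E symmetric and irreflexive.\<close>

definition simple_graph :: "('n::finite \<Rightarrow> 'n \<Rightarrow> bool) \<Rightarrow> bool" where
  "simple_graph E \<longleftrightarrow> (\<forall>u v. E u v \<longrightarrow> E v u) \<and> (\<forall>v. \<not> E v v)"

definition nbrs_in :: "('n \<Rightarrow> 'n \<Rightarrow> bool) \<Rightarrow> 'n set \<Rightarrow> 'n \<Rightarrow> 'n set" where
  "nbrs_in E S v = {u \<in> S. E u v}"

definition defensive_alliance :: "('n::finite \<Rightarrow> 'n \<Rightarrow> bool) \<Rightarrow> 'n set \<Rightarrow> bool" where
  "defensive_alliance E S \<longleftrightarrow> S \<noteq> {} \<and>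
     (\<forall>v\<in>S. card (nbrs_in E S v) + 1 \<ge> card (nbrs_in E (UNIV - S) v))"

definition strong_defensive_alliance :: "('n::finite \<Rightarrow> 'n \<Rightarrow> bool) \<Rightarrow> 'n set \<Rightarrow> bool" where
  "strong_defensive_alliance E S \<longleftrightarrow> S \<noteq> {} \<and>
     (\<forall>v\<in>S. card (nbrs_in E S v) \<ge> card (nbrs_in E (UNIV - S) v))"

definition dominating :: "('n::finite \<Rightarrow> 'n \<Rightarrow> bool) \<Rightarrow> 'n set \<Rightarrow> bool" where
  "dominating E S \<longleftrightarrow> (\<forall>v \<in> UNIV - S. \<exists>u\<in>S. E u v)"

definition global_defensive_alliance_number :: "('n::finite \<Rightarrow> 'n \<Rightarrow> bool) \<Rightarrow> nat" where
  "global_defensive_alliance_number E =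
     Min {card S | S. defensive_alliance E S \<and> dominating E S}"

definition global_strong_defensive_alliance_number :: "('n::finite \<Rightarrow> 'n \<Rightarrow> bool) \<Rightarrow> nat" where
  "global_strong_defensive_alliance_number E =
     Min {card S | S. strong_defensive_alliance E S \<and> dominating E S}"

definition adjacency_matrix :: "('n::finite \<Rightarrow> 'n \<Rightarrow> bool) \<Rightarrow> real^'n^'n" where
  "adjacency_matrix E = (\<chi> i j. if E i j then 1 else 0)"

definition spectral_radius :: "('n::finite \<Rightarrow> 'n \<Rightarrow> bool) \<Rightarrow> real" where
  "spectral_radius E =
     Max {l. \<exists>x::real^'n. x \<noteq> 0 \<and> adjacency_matrix E *v x = l *\<^sub>R x}"

end

theory Submission
  imports Defs
begin

lemma mat_sym:
  fixes A :: "real^'n^'n"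
  assumes "transpose A = A"
  shows "(A *v x) \<bullet> y = x \<bullet> (A *v y)"
proof -
  have "x \<bullet> (A *v y) = (x v* A) \<bullet> y" by (simp add: dot_lmul_matrix)
  also have "x v* A = transpose A *v x" by simp
  finally show ?thesis using assms by (simp add: inner_commute)
qed

lemma cont_quad: "continuous_on S (\<lambda>x::real^'n. x \<bullet> (A *v x))"
proof -
  have "bounded_linear (\<lambda>x::real^'n. A *v x)"
    by (simp add: linear_conv_bounded_linear)
  then have "continuous_on S (\<lambda>x::real^'n. A *v x)"
    using linear_continuous_on by blast
  then show ?thesis by (intro continuous_intros)
qed

lemma rayleigh_max:
  fixes A :: "real^'n^'n"
  assumes sym: "transpose A = A"
  shows "\<exists>v \<mu>. v \<noteq> 0 \<and> A *v v = \<mu> *\<^sub>R v \<and> (\<forall>x. x \<bullet> (A *v x) \<le> \<mu> * (x \<bullet> x))"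
proof -
  have "sphere (0::real^'n) 1 \<noteq> {}"
    by (simp)
  then obtain v where v: "v \<in> sphere (0::real^'n) 1"
    and vmax: "\<And>y. y \<in> sphere 0 1 \<Longrightarrow> y \<bullet> (A *v y) \<le> v \<bullet> (A *v v)"
    using continuous_attains_sup[OF compact_sphere _ cont_quad]
    by (metis \<open>sphere (0::real^'n) 1 \<noteq> {}\<close>)
  define \<mu> where "\<mu> = v \<bullet> (A *v v)"
  have nv: "norm v = 1" using v by simp
  have vv: "v \<bullet> v = 1" using nv by (simp add: dot_square_norm)
  have bound: "x \<bullet> (A *v x) \<le> \<mu> * (x \<bullet> x)" for x
  proof (cases "x = 0")
    case True then show ?thesis by simp
  next
    case False
    define u where "u = (1 / norm x) *\<^sub>R x"
    have "u \<in> sphere 0 1" using False by (simp add: u_def)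
    then have "u \<bullet> (A *v u) \<le> \<mu>" using vmax \<mu>_def by blast
    moreover have "u \<bullet> (A *v u) = (x \<bullet> (A *v x)) / (norm x)^2"
      by (simp add: u_def algebra_simps power2_eq_square)
    moreover have "x \<bullet> x = (norm x)^2" by (simp add: dot_square_norm)
    ultimately show ?thesis using False
      by (simp add: divide_le_eq)
  qed
  define q where "q x = \<mu> * (x \<bullet> x) - x \<bullet> (A *v x)" for x
  have q0: "q x \<ge> 0" for x using bound[of x] by (simp add: q_def)
  define w where "w = \<mu> *\<^sub>R v - A *v v"
  have qv: "q v = 0" using vv by (simp add: q_def \<mu>_def)
  have exp: "q (v + t *\<^sub>R w) = 2 * t * (w \<bullet> w) + t^2 * q w" for t
  proof -
    have s: "v \<bullet> (A *v w) = (A *v v) \<bullet> w" using mat_sym[OF sym, of v w] by simp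
    have "q (v + t *\<^sub>R w) = q v + 2 * t * (\<mu> * (v \<bullet> w) - (A *v v) \<bullet> w) + t^2 * q w"
      unfolding q_def using s
      by (simp add: algebra_simps inner_commute power2_eq_square matrix_vector_right_distrib matrix_vector_mult_scaleR)
    also have "\<mu> * (v \<bullet> w) - (A *v v) \<bullet> w = w \<bullet> w"
      by (simp add: w_def algebra_simps inner_commute)
    finally show ?thesis using qv by simp
  qed
  have "w = 0"
  proof (rule ccontr)
    assume "w \<noteq> 0"
    then have a: "w \<bullet> w > 0" by simp
    define c where "c = q w"
    have c: "c \<ge> 0" using q0 c_def by simp
    define t where "t = - (w \<bullet> w) / (c + 1)"
    have "0 \<le> 2 * t * (w \<bullet> w) + t^2 * c" using q0[of "v + t *\<^sub>R w"] exp c_def by simp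
    moreover have "2 * t * (w \<bullet> w) + t^2 * c < 0"
    proof -
      let ?a = "w \<bullet> w"
      have e: "(2 * t * ?a + t^2 * c) * (c+1)^2 = - (?a^2 * (c + 2))"
      proof -
        have tc: "t * (c+1) = - ?a" using c by (simp add: t_def)
        have "(2 * t * ?a + t^2 * c) * (c+1)^2 = 2 * ?a * (t * (c+1)) * (c+1) + c * (t * (c+1))^2"
          by (simp add: algebra_simps power2_eq_square)
        also have "\<dots> = - (?a^2 * (c + 2))" unfolding tc by (simp add: algebra_simps power2_eq_square)
        finally show ?thesis .
      qed
      have "- (?a^2 * (c + 2)) < 0" using a c by (simp add: mult_pos_pos)
      then have "(2 * t * ?a + t^2 * c) * (c+1)^2 < 0" using e by simp
      then show ?thesis using c by (simp add: mult_less_0_iff)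
    qed
    ultimately show False by simp
  qed
  then have "A *v v = \<mu> *\<^sub>R v" by (simp add: w_def)
  moreover have "v \<noteq> 0" using nv by auto
  ultimately show ?thesis using bound by blast
qed


lemma eig_finite:
  fixes A :: "real^'n^'n"
  assumes sym: "transpose A = A"
  shows "finite {l. \<exists>x. x \<noteq> 0 \<and> A *v x = l *\<^sub>R x}" (is "finite ?L")
proof -
  define f where "f l = (SOME x. x \<noteq> 0 \<and> A *v x = l *\<^sub>R x)" for l
  have fl: "f l \<noteq> 0 \<and> A *v f l = l *\<^sub>R f l" if "l \<in> ?L" for l
  proof -
    from that obtain x where "x \<noteq> 0 \<and> A *v x = l *\<^sub>R x" by blast
    then show ?thesis unfolding f_def by (rule someI)
  qed
  have inj: "inj_on f ?L"
  proof (rule inj_onI)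
    fix l l' assume l: "l \<in> ?L" and l': "l' \<in> ?L" and e: "f l = f l'"
    have "l *\<^sub>R f l = A *v f l" using fl[OF l] by simp
    also have "\<dots> = l' *\<^sub>R f l" using fl[OF l'] e by simp
    finally have "(l - l') *\<^sub>R f l = 0" by (simp add: algebra_simps)
    then show "l = l'" using fl[OF l] by simp
  qed
  have orth: "pairwise orthogonal (f ` ?L)"
  unfolding pairwise_def
  proof (intro ballI impI)
    fix a b assume "a \<in> f ` ?L" "b \<in> f ` ?L" "a \<noteq> b"
    then obtain l l' where l: "l \<in> ?L" and l': "l' \<in> ?L" and ab: "a = f l" "b = f l'" by blast
    have ne: "f l \<noteq> f l'" using ab \<open>a \<noteq> b\<close> by simp
    have "l \<noteq> l'" using ne by auto
    have "(A *v f l) \<bullet> f l' = f l \<bullet> (A *v f l')" by (rule mat_sym[OF sym])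
    then have "l * (f l \<bullet> f l') = l' * (f l \<bullet> f l')" using fl[OF l] fl[OF l'] by simp
    then have "f l \<bullet> f l' = 0" using \<open>l \<noteq> l'\<close> by simp
    then show "orthogonal a b" using ab by (simp add: orthogonal_def)
  qed
  have "0 \<notin> f ` ?L"
  proof
    assume "0 \<in> f ` ?L"
    then obtain l where l: "l \<in> ?L" and z: "0 = f l" by blast
    show False using fl[OF l] z by argo
  qed
  then have "independent (f ` ?L)" using pairwise_orthogonal_independent orth by blast
  then have "finite (f ` ?L)" using independent_bound by blast
  then show ?thesis using inj finite_imageD by blast
qed

lemma indicator_quad:
  fixes E :: "'n::finite \<Rightarrow> 'n \<Rightarrow> bool"
    and S :: "'n set"
  assumes sg: "simple_graph E"
  defines "x \<equiv> (\<chi> i. if i \<in> S then 1 else 0) :: real^'n"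
  shows "x \<bullet> (adjacency_matrix E *v x) = real (\<Sum>v\<in>S. card (nbrs_in E S v))"
    and "x \<bullet> x = real (card S)"
proof -
  have row: "(adjacency_matrix E *v x) $ i = real (card (nbrs_in E S i))" for i
  proof -
    have "(adjacency_matrix E *v x) $ i = (\<Sum>j\<in>UNIV. if j \<in> {u \<in> S. E u i} then 1 else 0)"
      unfolding matrix_vector_mult_def adjacency_matrix_def x_def
      using sg unfolding simple_graph_def by (simp, intro sum.cong) auto
    also have "\<dots> = real (card {u \<in> S. E u i})"
      by (simp add: sum.If_cases)
    finally show ?thesis by (simp add: nbrs_in_def)
  qed
  show "x \<bullet> (adjacency_matrix E *v x) = real (\<Sum>v\<in>S. card (nbrs_in E S v))"
  proof -
    have "x \<bullet> (adjacency_matrix E *v x) = (\<Sum>i\<in>UNIV. if i \<in> S then real (card (nbrs_in E S i)) else 0)"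
      unfolding inner_vec_def row by (rule sum.cong) (auto simp: x_def)
    also have "\<dots> = (\<Sum>i\<in>S. real (card (nbrs_in E S i)))" by (simp add: sum.If_cases)
    finally show ?thesis by simp
  qed
  show "x \<bullet> x = real (card S)"
  proof -
    have "x \<bullet> x = (\<Sum>i\<in>UNIV. if i \<in> S then 1 else 0)"
      unfolding inner_vec_def by (rule sum.cong) (auto simp: x_def)
    also have "\<dots> = real (card S)" by (simp add: sum.If_cases)
    finally show ?thesis .
  qed
qed


lemma spec_bound:
  fixes E :: "'n::finite \<Rightarrow> 'n \<Rightarrow> bool"
  assumes sg: "simple_graph E"
  shows "\<exists>\<mu>. spectral_radius E \<ge> \<mu> \<and> \<mu> \<ge> 0 \<and>
           (\<forall>S. real (\<Sum>v\<in>S. card (nbrs_in E S v)) \<le> \<mu> * real (card S))"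
proof -
  let ?A = "adjacency_matrix E"
  have sym: "transpose ?A = ?A"
    using sg unfolding simple_graph_def adjacency_matrix_def transpose_def
    by (simp add: vec_eq_iff)
  obtain v \<mu> where v: "v \<noteq> 0" "?A *v v = \<mu> *\<^sub>R v"
    and b: "\<And>x. x \<bullet> (?A *v x) \<le> \<mu> * (x \<bullet> x)"
    using rayleigh_max[OF sym] by blast
  have "\<mu> \<in> {l. \<exists>x::real^'n. x \<noteq> 0 \<and> ?A *v x = l *\<^sub>R x}" using v by blast
  then have r: "spectral_radius E \<ge> \<mu>"
    unfolding spectral_radius_def using eig_finite[OF sym] by (rule Max_ge[rotated])
  have bS: "real (\<Sum>v\<in>S. card (nbrs_in E S v)) \<le> \<mu> * real (card S)" for S
    using b[of "(\<chi> i. if i \<in> S then 1 else 0)"] indicator_quad[OF sg, of S] by simp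
  have "nbrs_in E {undefined} undefined = {}"
    using sg unfolding simple_graph_def nbrs_in_def by auto
  then have "0 \<le> \<mu>" using bS[of "{undefined}"] by simp
  then show ?thesis using r bS by blast
qed

lemma dom_bound:
  fixes E :: "'n::finite \<Rightarrow> 'n \<Rightarrow> bool"
  assumes sg: "simple_graph E" and d: "dominating E S"
  shows "CARD('n) \<le> card S + (\<Sum>v\<in>S. card (nbrs_in E (UNIV - S) v))"
proof -
  have "UNIV - S \<subseteq> (\<Union>v\<in>S. nbrs_in E (UNIV - S) v)"
  proof
    fix u assume u: "u \<in> UNIV - S"
    then obtain v where v: "v \<in> S" "E v u" using d unfolding dominating_def by blast
    then have "E u v" using sg unfolding simple_graph_def by blast
    then have "u \<in> nbrs_in E (UNIV - S) v" using u unfolding nbrs_in_def by simp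
    then show "u \<in> (\<Union>v\<in>S. nbrs_in E (UNIV - S) v)" using v by blast
  qed
  then have "card (UNIV - S) \<le> card (\<Union>v\<in>S. nbrs_in E (UNIV - S) v)"
    by (intro card_mono) auto
  also have "\<dots> \<le> (\<Sum>v\<in>S. card (nbrs_in E (UNIV - S) v))"
    by (rule card_UN_le) simp
  finally have "card (UNIV - S) \<le> (\<Sum>v\<in>S. card (nbrs_in E (UNIV - S) v))" .
  moreover have "card (UNIV - S) = CARD('n) - card S"
    by (simp add: card_Diff_subset)
  moreover have "card S \<le> CARD('n)" by (simp add: card_mono)
  ultimately show ?thesis by linarith
qed

lemma min_attained:
  fixes P :: "'n::finite set \<Rightarrow> bool"
  assumes "P UNIV"
  shows "\<exists>S. P S \<and> Min {card S | S. P S} = card S"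
proof -
  have fin: "finite {card S | S. P S}"
    by (rule finite_subset[of _ "{..CARD('n)}"]) (auto simp: card_mono)
  have ne: "{card S | S. P S} \<noteq> {}" using assms by blast
  show ?thesis using Min_in[OF fin ne] by auto
qed

theorem theorem3:
  fixes E :: "'n::finite \<Rightarrow> 'n \<Rightarrow> bool"
  assumes "simple_graph E"
  shows "int (global_defensive_alliance_number E)
           \<ge> \<lceil>real CARD('n) / (spectral_radius E + 2)\<rceil>
         \<and> int (global_strong_defensive_alliance_number E)
           \<ge> \<lceil>real CARD('n) / (spectral_radius E + 1)\<rceil>"
proof -
  let ?l = "spectral_radius E"
  obtain \<mu> where r: "?l \<ge> \<mu>" and m0: "\<mu> \<ge> 0"
    and bS: "\<And>S. real (\<Sum>v\<in>S. card (nbrs_in E S v)) \<le> \<mu> * real (card S)"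
    using spec_bound[OF assms] by blast
  have S1: "real (card S) * ?l \<ge> real (\<Sum>v\<in>S. card (nbrs_in E S v))" for S
  proof -
    have "\<mu> * real (card S) \<le> ?l * real (card S)" using r by (intro mult_right_mono) auto
    then show ?thesis using bS[of S] by (simp add: mult.commute)
  qed
  have P1: "defensive_alliance E UNIV \<and> dominating E UNIV"
    by (auto simp: defensive_alliance_def dominating_def nbrs_in_def)
  have P2: "strong_defensive_alliance E UNIV \<and> dominating E UNIV"
    by (auto simp: strong_defensive_alliance_def dominating_def nbrs_in_def)
  obtain S where S: "defensive_alliance E S" "dominating E S"
    and Seq: "global_defensive_alliance_number E = card S"
    using min_attained[of "\<lambda>S. defensive_alliance E S \<and> dominating E S", OF P1]
    unfolding global_defensive_alliance_number_def by blast
  obtain T where T: "strong_defensive_alliance E T" "dominating E T"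
    and Teq: "global_strong_defensive_alliance_number E = card T"
    using min_attained[of "\<lambda>S. strong_defensive_alliance E S \<and> dominating E S", OF P2]
    unfolding global_strong_defensive_alliance_number_def by blast
  have a: "CARD('n) \<le> card S + (\<Sum>v\<in>S. card (nbrs_in E (UNIV - S) v))"
    by (rule dom_bound[OF assms S(2)])
  have "(\<Sum>v\<in>S. card (nbrs_in E (UNIV - S) v)) \<le> (\<Sum>v\<in>S. card (nbrs_in E S v) + 1)"
    using S(1) unfolding defensive_alliance_def by (intro sum_mono) auto
  also have "\<dots> = (\<Sum>v\<in>S. card (nbrs_in E S v)) + card S" by (simp only: sum.distrib) simp
  finally have "real CARD('n) \<le> 2 * real (card S) + real (\<Sum>v\<in>S. card (nbrs_in E S v))"
    using a by linarith
  then have "real CARD('n) \<le> real (card S) * (?l + 2)"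
    using S1[of S] by (simp add: algebra_simps)
  then have "real CARD('n) / (?l + 2) \<le> real (card S)"
    using r m0 by (simp add: divide_le_eq)
  then have g1: "\<lceil>real CARD('n) / (?l + 2)\<rceil> \<le> int (card S)"
    by (simp add: ceiling_le_iff)
  have a2: "CARD('n) \<le> card T + (\<Sum>v\<in>T. card (nbrs_in E (UNIV - T) v))"
    by (rule dom_bound[OF assms T(2)])
  have "(\<Sum>v\<in>T. card (nbrs_in E (UNIV - T) v)) \<le> (\<Sum>v\<in>T. card (nbrs_in E T v))"
    using T(1) unfolding strong_defensive_alliance_def by (intro sum_mono) auto
  then have "real CARD('n) \<le> real (card T) + real (\<Sum>v\<in>T. card (nbrs_in E T v))"
    using a2 by linarith
  then have "real CARD('n) \<le> real (card T) * (?l + 1)"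
    using S1[of T] by (simp add: algebra_simps)
  then have "real CARD('n) / (?l + 1) \<le> real (card T)"
    using r m0 by (simp add: divide_le_eq)
  then have g2: "\<lceil>real CARD('n) / (?l + 1)\<rceil> \<le> int (card T)"
    by (simp add: ceiling_le_iff)
  show ?thesis using g1 g2 Seq Teq by simp
qed

end
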